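(* Let $A_1,\ldots,A_r$ be non-empty, pairwise disjoint finite sets and $L=\partial\Delta^{A_1}*\cdots*\partial\Delta^{A_r}$. Then: (1) $\mathbb{R}\mathcal{Z}_L=S^{|A_1|-1}\times\cdots\times S^{|A_r|-1}$ (via $\mathbb{R}\mathcal{Z}_{\partial\Delta^{A_i}}=S^{|A_i|-1}$); (2) if $T=\{(x_1,\ldots,x_r)\in S^{|A_1|-1}\times\cdots\times S^{|A_r|-1}\mid x_i\text{ is the basepoint for some }i\}$ is the fat wedge, then the natural inclusion $T\to\mathbb{R}\mathcal{Z}_L^{|A_1|+\cdots+|A_r|-1}$ is a homotopy equivalence.
   Context: $\Delta^S$ is the full simplex on $S$, $\partial\Delta^S$ its boundary (proper subsets of $S$), $*$ the join. For a simplicial complex $K$ on vertex set $V$ with $|V|=n$, the real moment-angle complex is $\mathbb{R}\mathcal{Z}_K=\bigcup_{\sigma\in K}\prod_{v\in V}Y_v\subset (CS^0)^V$ where $Y_v=CS^0$ (reduced cone, an interval) if $v\in\sigma$ and $Y_v=S^0$ otherwise, with basepoint the basepoint of $S^0$. Its fat wedge filtration is $\mathbb{R}\mathcal{Z}_K^i=\{(x_v)\in\mathbb{R}\mathcal{Z}_K\mid\text{at least }n-i\text{ of the }x_v\text{ are the basepoint}\}$, $0\le i\le n$. The basepoint of $S^{|A_i|-1}=\mathbb{R}\mathcal{Z}_{\partial\Delta^{A_i}}$ is the point with all coordinates at the basepoint. *)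

theory Defs
  imports "HOL-Analysis.Analysis"
begin

text \<open>Conventions: the reduced cone CS^0 is the interval [0,1], S^0 = {0,1} and the
basepoint is 0. Simplicial complexes are families of faces (sets of vertices).\<close>

definition bdry_simplex :: "'a set \<Rightarrow> 'a set set" where
  "bdry_simplex S = {\<sigma>. \<sigma> \<subset> S}"

definition cx_join :: "(nat \<Rightarrow> 'a set set) \<Rightarrow> nat \<Rightarrow> 'a set set" where
  "cx_join K r = {\<Union>i<r. \<sigma> i | \<sigma>. \<forall>i<r. \<sigma> i \<in> K i}"

text \<open>Real moment-angle complex of K on vertex set V, inside (CS^0)^V = [0,1]^V.\<close>
definition rmac :: "'a set \<Rightarrow> 'a set set \<Rightarrow> ('a \<Rightarrow> real) set" where
  "rmac V K = (\<Union>\<sigma>\<in>K. PiE V (\<lambda>v. if v \<in> \<sigma> then {0..1} else {0,1}))"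

definition rmac_top :: "'a set \<Rightarrow> 'a set set \<Rightarrow> ('a \<Rightarrow> real) topology" where
  "rmac_top V K = subtopology (product_topology (\<lambda>_. euclideanreal) V) (rmac V K)"

definition rmac_fw :: "'a set \<Rightarrow> 'a set set \<Rightarrow> nat \<Rightarrow> ('a \<Rightarrow> real) set" where
  "rmac_fw V K i = {x \<in> rmac V K. card V - i \<le> card {v \<in> V. x v = 0}}"

definition homotopy_equivalence_map ::
  "'a topology \<Rightarrow> 'b topology \<Rightarrow> ('a \<Rightarrow> 'b) \<Rightarrow> bool" where
  "homotopy_equivalence_map X Y f \<longleftrightarrow> continuous_map X Y f \<and>
     (\<exists>g. continuous_map Y X g \<and> homotopic_with (\<lambda>h. True) X X (g \<circ> f) id \<and>
          homotopic_with (\<lambda>h. True) Y Y (f \<circ> g) id)"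

end

theory Submission
  imports Defs
begin


lemma rmac_bdry:
  "rmac A (bdry_simplex A) = {x :: 'a \<Rightarrow> real. x \<in> extensional A \<and> (\<forall>v\<in>A. x v \<in> {0..1}) \<and> (\<exists>v\<in>A. x v \<in> {0,1})}"
proof (rule set_eqI, rule iffI)
  fix x assume "x \<in> rmac A (bdry_simplex A)"
  then obtain \<sigma> where s: "\<sigma> \<subset> A" and x: "x \<in> PiE A (\<lambda>v. if v \<in> \<sigma> then {0..1} else {0,1})"
    by (auto simp: rmac_def bdry_simplex_def)
  from s obtain w where w: "w \<in> A" "w \<notin> \<sigma>" by blast
  have "\<forall>v\<in>A. x v \<in> {0..1}"
  proof
    fix v assume "v \<in> A" then have "x v \<in> (if v \<in> \<sigma> then {0..1} else {0,1})" using x by (auto simp: PiE_iff)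
    then show "x v \<in> {0..1}" by (auto split: if_splits)
  qed
  moreover have "x w \<in> {0,1}" using x w by (auto simp: PiE_iff)
  ultimately show "x \<in> {x :: 'a \<Rightarrow> real. x \<in> extensional A \<and> (\<forall>v\<in>A. x v \<in> {0..1}) \<and> (\<exists>v\<in>A. x v \<in> {0,1})}"
    using x w by (auto simp: PiE_iff)
next
  fix x assume "x \<in> {x :: 'a \<Rightarrow> real. x \<in> extensional A \<and> (\<forall>v\<in>A. x v \<in> {0..1}) \<and> (\<exists>v\<in>A. x v \<in> {0,1})}"
  then obtain w where x: "x \<in> extensional A" "\<forall>v\<in>A. x v \<in> {0..1}" and w: "w \<in> A" "x w \<in> {0,1}" by blast
  have "A - {w} \<in> bdry_simplex A" using w by (auto simp: bdry_simplex_def)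
  moreover have "x \<in> PiE A (\<lambda>v. if v \<in> A - {w} then {0..1} else {0,1})"
    using x w by (auto simp: PiE_iff)
  ultimately show "x \<in> rmac A (bdry_simplex A)" unfolding rmac_def by blast
qed

locale blocks =
  fixes A :: "nat \<Rightarrow> 'a set" and r :: nat
  assumes fin: "\<And>i. i < r \<Longrightarrow> finite (A i)"
    and ne: "\<And>i. i < r \<Longrightarrow> A i \<noteq> {}"
    and disj: "\<And>i j. i < r \<Longrightarrow> j < r \<Longrightarrow> i \<noteq> j \<Longrightarrow> A i \<inter> A j = {}"
begin

abbreviation "VV \<equiv> (\<Union>i<r. A i)"
abbreviation "LL \<equiv> cx_join (\<lambda>i. bdry_simplex (A i)) r"

lemma rmac_L:
  "rmac VV LL = {x :: 'a \<Rightarrow> real. x \<in> extensional VV \<and> (\<forall>v\<in>VV. x v \<in> {0..1}) \<and> (\<forall>i<r. \<exists>v\<in>A i. x v \<in> {0,1})}"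
proof (rule set_eqI, rule iffI)
  fix x assume "x \<in> rmac VV LL"
  then obtain \<sigma> where s: "\<forall>i<r. \<sigma> i \<subset> A i" and
    x: "x \<in> PiE VV (\<lambda>v. if v \<in> (\<Union>i<r. \<sigma> i) then {0..1} else {0,1})"
    by (auto simp: rmac_def bdry_simplex_def cx_join_def)
  have "\<forall>v\<in>VV. x v \<in> {0..1}"
  proof
    fix v assume "v \<in> VV" then have "x v \<in> (if v \<in> (\<Union>i<r. \<sigma> i) then {0..1} else {0,1})" by (rule PiE_mem[OF x])
    then show "x v \<in> {0..1}" by (auto split: if_splits)
  qed
  moreover have "\<exists>v\<in>A i. x v \<in> {0,1}" if i: "i < r" for i
  proof -
    from s i obtain w where w: "w \<in> A i" "w \<notin> \<sigma> i" by blast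
    have "w \<notin> (\<Union>i<r. \<sigma> i)"
    proof
      assume "w \<in> (\<Union>i<r. \<sigma> i)"
      then obtain j where j: "j < r" "w \<in> \<sigma> j" by blast
      then have "j \<noteq> i" using w by auto
      moreover have "w \<in> A j" using s j by blast
      ultimately show False using disj[OF i j(1)] w by blast
    qed
    moreover have "w \<in> VV" using w i by blast
    ultimately have "x w \<in> {0,1}" using PiE_mem[OF x, of w] by simp
    then show ?thesis using w by blast
  qed
  ultimately show "x \<in> {x :: 'a \<Rightarrow> real. x \<in> extensional VV \<and> (\<forall>v\<in>VV. x v \<in> {0..1}) \<and> (\<forall>i<r. \<exists>v\<in>A i. x v \<in> {0,1})}"
    using x by (auto simp: PiE_iff)
next
  fix x assume "x \<in> {x :: 'a \<Rightarrow> real. x \<in> extensional VV \<and> (\<forall>v\<in>VV. x v \<in> {0..1}) \<and> (\<forall>i<r. \<exists>v\<in>A i. x v \<in> {0,1})}"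
  then have x: "x \<in> extensional VV" "\<forall>v\<in>VV. x v \<in> {0..1}" and w0: "\<forall>i<r. \<exists>v\<in>A i. x v \<in> {0,1}" by auto
  from w0 obtain w where w: "\<And>i. i < r \<Longrightarrow> w i \<in> A i \<and> x (w i) \<in> {0,1}" by metis
  define \<sigma> where "\<sigma> i = A i - {w i}" for i
  have "(\<Union>i<r. \<sigma> i) \<in> LL"
    unfolding cx_join_def bdry_simplex_def using w by (auto simp: \<sigma>_def)
  moreover have "x \<in> PiE VV (\<lambda>v. if v \<in> (\<Union>i<r. \<sigma> i) then {0..1} else {0,1})"
  proof -
    have "x v \<in> {0,1}" if "v \<in> VV" "v \<notin> (\<Union>i<r. \<sigma> i)" for v
    proof -
      from that obtain i where "i < r" "v \<in> A i" "v \<notin> \<sigma> i" by auto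
      then have "v = w i" by (auto simp: \<sigma>_def)
      then show ?thesis using w \<open>i < r\<close> by auto
    qed
    then show ?thesis using x by (auto simp: PiE_iff)
  qed
  ultimately show "x \<in> rmac VV LL" unfolding rmac_def by blast
qed

end


definition Rf :: "real \<Rightarrow> real \<Rightarrow> real" where
  "Rf t s = min (1+t) (max (1-t) ((1 - t + (1+t) * min s (1/2)) / (1 - min s (1/2))))"
definition Pf :: "real \<Rightarrow> real \<Rightarrow> real" where
  "Pf t s = max 0 ((1+t) * s - t)"

lemma RP_a: assumes "0 \<le> t" "t \<le> 1" "M \<le> 1" "0 \<le> M"
  shows "Rf t (M - 1) = 1 - t \<and> Pf t (M - 1) = 0"
proof -
  have "min (M-1) (1/2) = M - 1" using assms by auto
  moreover have "(1 - t + (1+t) * (M-1)) / (1 - (M-1)) \<le> 1 - t"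
    using assms by (simp add: divide_simps) (auto simp: algebra_simps intro: mult_left_mono mult_nonneg_nonneg)
  moreover have "(1+t)*(M-1) \<le> 0" using assms by (simp add: mult_nonneg_nonpos)
  ultimately show ?thesis using assms unfolding Rf_def Pf_def
    by (auto simp: max_def min_def)
qed

lemma RP_b: assumes "0 \<le> t" "t \<le> 1" "0 < m" "m \<le> 1" "t \<le> (1+t)*m"
  shows "Rf t m = 1 + t \<and> Pf t m = (1+t)*m - t"
proof -
  have "(1 - t + (1+t) * min m (1/2)) / (1 - min m (1/2)) \<ge> 1 + t"
  proof (cases "m \<le> 1/2")
    case True
    then show ?thesis using assms by (simp add: divide_simps min_def) (auto simp: algebra_simps)
  next
    case False
    then show ?thesis using assms by (simp add: divide_simps min_def)
  qed
  then show ?thesis using assms unfolding Rf_def Pf_def by (auto simp: max_def min_def)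
qed

lemma RP_c: assumes "0 \<le> t" "t \<le> 1" "0 < m" "m \<le> 1" "(1+t)*m < t"
  shows "Pf t m = 0 \<and> 0 \<le> Rf t m \<and> Rf t m * (1 - m) = 1 - t + (1+t)*m"
proof -
  have m2: "m < 1/2"
  proof -
    have "(1+t)*m < t" by fact
    then have "m < t/(1+t)" using assms by (simp add: divide_simps mult.commute)
    also have "t/(1+t) \<le> 1/2" using assms by (simp add: divide_simps)
    finally show ?thesis .
  qed
  let ?f = "(1 - t + (1+t) * m) / (1 - m)"
  have f1: "?f \<le> 1 + t" using assms m2 by (simp add: divide_simps) (auto simp: algebra_simps)
  have f2: "?f \<ge> 1 - t" using assms m2 by (simp add: divide_simps) (auto simp: algebra_simps)
  have "Rf t m = ?f" using f1 f2 m2 unfolding Rf_def by (simp add: min_def max_def)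
  moreover have "?f * (1 - m) = 1 - t + (1+t)*m" using m2 by simp
  ultimately show ?thesis using assms f2 unfolding Pf_def by auto
qed


definition hb :: "real \<Rightarrow> 'a set \<Rightarrow> ('a \<Rightarrow> real) \<Rightarrow> 'a \<Rightarrow> real" where
  "hb t A y v = (let m = Min (y ` A); M = Max (y ` A) in Rf t (m + M - 1) * (y v - m) + Pf t (m + M - 1))"

lemma hb_block:
  assumes A: "finite A" "A \<noteq> {}" and t: "0 \<le> t" "t \<le> 1"
    and y01: "\<forall>v\<in>A. y v \<in> {0..1}" and yb: "\<exists>v\<in>A. y v \<in> {0,1}"
  shows "(\<forall>v\<in>A. hb t A y v \<in> {0..1}) \<and> (\<exists>v\<in>A. hb t A y v \<in> {0,1})
     \<and> ((\<exists>v\<in>A. y v = 0) \<longrightarrow> (\<exists>v\<in>A. hb t A y v = 0))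
     \<and> ((\<exists>v\<in>A. y v = 0) \<and> t = 1 \<longrightarrow> (\<forall>v\<in>A. hb t A y v = 0))
     \<and> ((\<forall>v\<in>A. y v = 0) \<longrightarrow> (\<forall>v\<in>A. hb t A y v = 0))
     \<and> (t = 0 \<longrightarrow> (\<forall>v\<in>A. hb t A y v = y v))"
proof -
  define m where "m = Min (y ` A)"
  define M where "M = Max (y ` A)"
  have fin: "finite (y ` A)" "y ` A \<noteq> {}" using A by auto
  have mle: "\<And>v. v \<in> A \<Longrightarrow> m \<le> y v" unfolding m_def using fin by simp
  have Mge: "\<And>v. v \<in> A \<Longrightarrow> y v \<le> M" unfolding M_def using fin by simp
  obtain vm where vm: "vm \<in> A" "y vm = m" unfolding m_def using Min_in[OF fin] by auto
  obtain vM where vM: "vM \<in> A" "y vM = M" unfolding M_def using Max_in[OF fin] by auto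
  have m0: "0 \<le> m" using y01 vm by auto
  have M1: "M \<le> 1" using y01 vM by auto
  have mM: "m \<le> M" using mle Mge vm by fastforce
  have y0: "(\<exists>v\<in>A. y v = 0) \<longleftrightarrow> m = 0" using mle m0 vm by fastforce
  have mor: "m = 0 \<or> M = 1" using yb mle Mge m0 M1 by fastforce
  have hbe: "\<And>v. hb t A y v = Rf t (m + M - 1) * (y v - m) + Pf t (m + M - 1)"
    by (simp add: hb_def m_def M_def Let_def)
  show ?thesis
  proof (cases "m = 0")
    case True
    then have RP: "Rf t (m + M - 1) = 1 - t \<and> Pf t (m + M - 1) = 0" using RP_a[OF t M1] m0 mM by simp
    have "hb t A y v = (1 - t) * y v" for v using RP True hbe by simp
    moreover have "(1 - t) * y v \<in> {0..1}" if "v \<in> A" for v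
      using y01 that t by (auto intro: mult_le_one mult_nonneg_nonneg)
    moreover have "(1 - t) * y vm = 0" using vm True by simp
    ultimately show ?thesis using y0 True vm by auto
  next
    case False
    then have M: "M = 1" and mpos: "0 < m" using mor m0 by auto
    have s: "m + M - 1 = m" using M by simp
    have "\<not> (\<exists>v\<in>A. y v = 0)" using y0 False by simp
    show ?thesis
    proof (cases "t \<le> (1+t)*m")
      case True
      from RP_b[OF t mpos _ True] M mM have RP: "Rf t m = 1 + t \<and> Pf t m = (1+t)*m - t" by simp
      have he: "hb t A y v = (1 + t) * y v - t" for v using RP hbe[of v] s by (simp add: algebra_simps)
      have "(1 + t) * y v - t \<in> {0..1}" if "v \<in> A" for v
      proof -
        have "(1+t)*m \<le> (1+t) * y v" using mle[OF that] t by (intro mult_left_mono) auto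
        moreover have "y v \<le> 1" using y01 that by auto
        then have "(1+t) * y v \<le> 1 + t" using t by (simp add: mult_left_le)
        ultimately show ?thesis using True by auto
      qed
      moreover have "(1 + t) * y vM - t = 1" using vM M by simp
      ultimately show ?thesis using \<open>\<not> (\<exists>v\<in>A. y v = 0)\<close> he vM by auto
    next
      case False
      from RP_c[OF t mpos _ ] False M mM have RP: "Pf t m = 0 \<and> 0 \<le> Rf t m \<and> Rf t m * (1 - m) = 1 - t + (1+t)*m" by simp
      have he: "hb t A y v = Rf t m * (y v - m)" for v using RP hbe s by simp
      have "Rf t m * (y v - m) \<in> {0..1}" if "v \<in> A" for v
      proof -
        have "0 \<le> Rf t m * (y v - m)" using RP mle[OF that] by simp
        moreover have "Rf t m * (y v - m) \<le> Rf t m * (1 - m)"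
          using RP y01 that by (intro mult_left_mono) auto
        ultimately show ?thesis using RP False by auto
      qed
      moreover have "Rf t m * (y vm - m) = 0" using vm by simp
      moreover have "t \<noteq> 0" using False mpos by auto
      ultimately show ?thesis using \<open>\<not> (\<exists>v\<in>A. y v = 0)\<close> he vm by auto
    qed
  qed
qed



lemma continuous_map_Min:
  assumes "finite A" "A \<noteq> {}" "\<And>v. v \<in> A \<Longrightarrow> continuous_map X euclideanreal (f v)"
  shows "continuous_map X euclideanreal (\<lambda>x. Min ((\<lambda>v. f v x) ` A))"
  using assms
proof (induction A rule: finite_ne_induct)
  case (singleton a) then show ?case by simp
next
  case (insert a B)
  have "(\<lambda>x. Min ((\<lambda>v. f v x) ` insert a B)) = (\<lambda>x. min (f a x) (Min ((\<lambda>v. f v x) ` B)))"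
    using insert by (simp add: Min_insert)
  then show ?case using insert by (auto intro!: continuous_map_real_min)
qed

lemma continuous_map_Max:
  assumes "finite A" "A \<noteq> {}" "\<And>v. v \<in> A \<Longrightarrow> continuous_map X euclideanreal (f v)"
  shows "continuous_map X euclideanreal (\<lambda>x. Max ((\<lambda>v. f v x) ` A))"
  using assms
proof (induction A rule: finite_ne_induct)
  case (singleton a) then show ?case by simp
next
  case (insert a B)
  have "(\<lambda>x. Max ((\<lambda>v. f v x) ` insert a B)) = (\<lambda>x. max (f a x) (Max ((\<lambda>v. f v x) ` B)))"
    using insert by (simp add: Max_insert)
  then show ?case using insert by (auto intro!: continuous_map_real_max)
qed

lemma continuous_map_Rf:
  assumes "continuous_map X euclideanreal f" "continuous_map X euclideanreal g"
  shows "continuous_map X euclideanreal (\<lambda>x. Rf (f x) (g x))"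
proof -
  have g: "continuous_map X euclideanreal (\<lambda>x. min (g x) (1/2))"
    by (rule continuous_map_real_min[OF assms(2)]) simp
  have d: "continuous_map X euclideanreal (\<lambda>x. (1 - f x + (1 + f x) * min (g x) (1/2)) / (1 - min (g x) (1/2)))"
    apply (rule continuous_map_real_divide)
      apply (rule continuous_map_add)
       apply (rule continuous_map_diff[OF continuous_map_const[THEN iffD2] assms(1)]) apply simp
      apply (rule continuous_map_real_mult[OF continuous_map_add[OF _ assms(1)] g]) apply simp
     apply (rule continuous_map_diff[OF _ g]) apply simp
    by (simp add: min_def)
  show ?thesis unfolding Rf_def
    apply (rule continuous_map_real_min)
     apply (rule continuous_map_add[OF _ assms(1)]) apply simp
    apply (rule continuous_map_real_max[OF continuous_map_diff[OF _ assms(1)] d]) by simp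
qed

lemma continuous_map_Pf:
  assumes "continuous_map X euclideanreal f" "continuous_map X euclideanreal g"
  shows "continuous_map X euclideanreal (\<lambda>x. Pf (f x) (g x))"
  unfolding Pf_def
  apply (rule continuous_map_real_max) apply simp
  apply (rule continuous_map_diff[OF continuous_map_real_mult[OF continuous_map_add[OF _ assms(1)] assms(2)] assms(1)])
  by simp

lemma continuous_map_hb:
  assumes "finite B" "B \<noteq> {}" "B \<subseteq> V" "v \<in> V"
  shows "continuous_map (prod_topology (top_of_set {0..1}) (subtopology (product_topology (\<lambda>_. euclideanreal) V) S))
     euclideanreal (\<lambda>p. hb (fst p) B (snd p) v)"
proof -
  let ?Z = "prod_topology (top_of_set {0..1::real}) (subtopology (product_topology (\<lambda>_. euclideanreal) V) S)"
  have c: "continuous_map ?Z euclideanreal (\<lambda>p. snd p w)" if "w \<in> V" for w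
  proof -
    have "continuous_map (subtopology (product_topology (\<lambda>_. euclideanreal) V) S) euclideanreal (\<lambda>x. x w)"
      using that by (intro continuous_map_from_subtopology continuous_map_product_projection)
    from continuous_map_compose[OF continuous_map_snd this] show ?thesis by (simp add: comp_def)
  qed
  have cf: "continuous_map ?Z euclideanreal (\<lambda>p. fst p)"
    by (rule continuous_map_into_fulltopology[OF continuous_map_fst])
  have cm: "continuous_map ?Z euclideanreal (\<lambda>p. Min ((\<lambda>w. snd p w) ` B))"
    using assms by (intro continuous_map_Min c) auto
  have cM: "continuous_map ?Z euclideanreal (\<lambda>p. Max ((\<lambda>w. snd p w) ` B))"
    using assms by (intro continuous_map_Max c) auto
  have s: "continuous_map ?Z euclideanreal (\<lambda>p. Min ((\<lambda>w. snd p w) ` B) + Max ((\<lambda>w. snd p w) ` B) - 1)"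
    by (rule continuous_map_diff[OF continuous_map_add[OF cm cM]]) simp
  show ?thesis unfolding hb_def Let_def
    by (rule continuous_map_add[OF continuous_map_real_mult[OF continuous_map_Rf[OF cf s] continuous_map_diff[OF c[OF assms(4)] cm]] continuous_map_Pf[OF cf s]])
qed



context blocks begin

definition blk :: "'a \<Rightarrow> nat" where "blk v = (THE i. i < r \<and> v \<in> A i)"

lemma blk: "i < r \<Longrightarrow> v \<in> A i \<Longrightarrow> blk v = i"
  unfolding blk_def by (rule the_equality) (use disj in blast)+

definition HH :: "real \<Rightarrow> ('a \<Rightarrow> real) \<Rightarrow> 'a \<Rightarrow> real" where
  "HH t x = (\<lambda>v\<in>VV. hb t (A (blk v)) x v)"

abbreviation "TT \<equiv> {x \<in> rmac VV LL. \<exists>i<r. \<forall>v\<in>A i. x v = 0}"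
abbreviation "FW \<equiv> {x \<in> rmac VV LL. \<exists>v\<in>VV. x v = 0}"

lemma HH_block: "i < r \<Longrightarrow> v \<in> A i \<Longrightarrow> HH t x v = hb t (A i) x v"
  unfolding HH_def using blk by auto

lemma HH_B:
  assumes x: "x \<in> rmac VV LL" and i: "i < r" and t: "0 \<le> t" "t \<le> 1"
  shows "(\<forall>v\<in>A i. HH t x v \<in> {0..1}) \<and> (\<exists>v\<in>A i. HH t x v \<in> {0,1})
     \<and> ((\<exists>v\<in>A i. x v = 0) \<longrightarrow> (\<exists>v\<in>A i. HH t x v = 0))
     \<and> ((\<exists>v\<in>A i. x v = 0) \<and> t = 1 \<longrightarrow> (\<forall>v\<in>A i. HH t x v = 0))
     \<and> ((\<forall>v\<in>A i. x v = 0) \<longrightarrow> (\<forall>v\<in>A i. HH t x v = 0))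
     \<and> (t = 0 \<longrightarrow> (\<forall>v\<in>A i. HH t x v = x v))"
proof -
  have x01: "\<forall>v\<in>VV. x v \<in> {0..1}" and xb: "\<forall>i<r. \<exists>v\<in>A i. x v \<in> {0,1}"
    using x rmac_L by auto
  have "\<forall>v\<in>A i. x v \<in> {0..1}" using x01 i by auto
  from hb_block[OF fin[OF i] ne[OF i] t this] xb i
  show ?thesis using HH_block[OF i] by simp
qed

lemma HH_rmac: assumes x: "x \<in> rmac VV LL" and t: "0 \<le> t" "t \<le> 1"
  shows "HH t x \<in> rmac VV LL"
proof -
  have "\<forall>v\<in>VV. HH t x v \<in> {0..1}" using HH_B[OF x _ t] by blast
  moreover have "\<forall>i<r. \<exists>v\<in>A i. HH t x v \<in> {0,1}" using HH_B[OF x _ t] by blast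
  moreover have "HH t x \<in> extensional VV" unfolding HH_def by simp
  ultimately show ?thesis unfolding rmac_L by blast
qed

lemma HH_FW: assumes x: "x \<in> FW" and t: "0 \<le> t" "t \<le> 1"
  shows "HH t x \<in> FW"
proof -
  from x obtain i v where "i < r" "v \<in> A i" "x v = 0" by auto
  then obtain w where "w \<in> A i" "HH t x w = 0" using HH_B[OF _ _ t, of x i] x by blast
  then show ?thesis using HH_rmac[OF _ t, of x] x \<open>i < r\<close> by auto
qed

lemma HH_TT: assumes x: "x \<in> TT" and t: "0 \<le> t" "t \<le> 1"
  shows "HH t x \<in> TT"
proof -
  from x obtain i where "i < r" "\<forall>v\<in>A i. x v = 0" by auto
  then have "\<forall>w\<in>A i. HH t x w = 0" using HH_B[OF _ _ t, of x i] x by blast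
  then show ?thesis using HH_rmac[OF _ t, of x] x \<open>i < r\<close> by auto
qed

lemma HH_1: assumes x: "x \<in> FW" shows "HH 1 x \<in> TT"
proof -
  from x obtain i v where "i < r" "v \<in> A i" "x v = 0" by auto
  then have "\<forall>w\<in>A i. HH 1 x w = 0" using HH_B[of x i 1] x by auto
  then show ?thesis using HH_rmac[of x 1] x \<open>i < r\<close> by auto
qed

lemma HH_0: assumes x: "x \<in> rmac VV LL" shows "HH 0 x = x"
proof
  fix v show "HH 0 x v = x v"
  proof (cases "v \<in> VV")
    case True
    then obtain i where "i < r" "v \<in> A i" by auto
    then show ?thesis using HH_B[OF x, of i 0] by auto
  next
    case False
    moreover have "x \<in> extensional VV" using x rmac_L by auto
    ultimately show ?thesis by (simp add: HH_def extensional_def)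
  qed
qed

lemma HH_cont:
  "continuous_map (prod_topology (top_of_set {0..1}) (subtopology (product_topology (\<lambda>_. euclideanreal) VV) S))
     (product_topology (\<lambda>_. euclideanreal) VV) (\<lambda>p. HH (fst p) (snd p))"
proof (subst continuous_map_componentwise, intro conjI ballI)
  show "(\<lambda>p. HH (fst p) (snd p)) ` topspace (prod_topology (top_of_set {0..1}) (subtopology (product_topology (\<lambda>_. euclideanreal) VV) S)) \<subseteq> extensional VV"
    unfolding HH_def by auto
next
  fix v assume v: "v \<in> VV"
  then obtain i where i: "i < r" "v \<in> A i" by auto
  have "continuous_map (prod_topology (top_of_set {0..1}) (subtopology (product_topology (\<lambda>_. euclideanreal) VV) S))
     euclideanreal (\<lambda>p. hb (fst p) (A i) (snd p) v)"
    by (rule continuous_map_hb) (use fin ne i v in auto)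
  then show "continuous_map (prod_topology (top_of_set {0..1}) (subtopology (product_topology (\<lambda>_. euclideanreal) VV) S))
     euclideanreal (\<lambda>p. HH (fst p) (snd p) v)"
    using HH_block[OF i] by simp
qed

end


context blocks begin

abbreviation "PT \<equiv> product_topology (\<lambda>_. euclideanreal) VV"

lemma rmac_sub: "rmac VV LL \<subseteq> topspace PT"
proof
  fix x assume "x \<in> rmac VV LL"
  then have "x \<in> extensional VV" using rmac_L by auto
  then show "x \<in> topspace PT" by (simp add: PiE_iff)
qed

lemma HH_cont_into:
  assumes S: "S \<subseteq> rmac VV LL" and img: "\<And>t x. t \<in> {0..1} \<Longrightarrow> x \<in> S \<Longrightarrow> HH t x \<in> S'"
  shows "continuous_map (prod_topology (top_of_set {0..1}) (subtopology PT S)) (subtopology PT S') (\<lambda>p. HH (fst p) (snd p))"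
proof (rule continuous_map_into_subtopology)
  show "continuous_map (prod_topology (top_of_set {0..1}) (subtopology PT S)) PT (\<lambda>p. HH (fst p) (snd p))"
    by (rule HH_cont)
  show "(\<lambda>p. HH (fst p) (snd p)) \<in> topspace (prod_topology (top_of_set {0..1}) (subtopology PT S)) \<rightarrow> S'"
    using img by auto
qed

lemma hom_equiv:
  "homotopy_equivalence_map (subtopology PT TT) (subtopology PT FW) id"
proof -
  have TTFW: "TT \<subseteq> FW"
  proof
    fix x assume "x \<in> TT"
    then obtain i where i: "i < r" "\<forall>v\<in>A i. x v = 0" and x: "x \<in> rmac VV LL" by auto
    from ne[OF i(1)] obtain v where "v \<in> A i" by auto
    then show "x \<in> FW" using i x by auto
  qed
  have top1: "topspace (subtopology PT TT) = TT" using rmac_sub by auto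
  have top2: "topspace (subtopology PT FW) = FW" using rmac_sub by auto
  have c1: "continuous_map (subtopology PT TT) (subtopology PT FW) id"
    by (rule continuous_map_into_subtopology[OF continuous_map_from_subtopology[OF continuous_map_id]]) (intro Pi_I, unfold id_apply top1, erule subsetD[OF TTFW])
  have hT: "continuous_map (prod_topology (top_of_set {0..1}) (subtopology PT TT)) (subtopology PT TT) (\<lambda>p. HH (fst p) (snd p))"
    by (rule HH_cont_into) (blast, rule HH_TT, auto)
  have hF: "continuous_map (prod_topology (top_of_set {0..1}) (subtopology PT FW)) (subtopology PT FW) (\<lambda>p. HH (fst p) (snd p))"
    by (rule HH_cont_into) (blast, rule HH_FW, auto)
  have pair: "continuous_map (subtopology PT FW) (prod_topology (top_of_set {0..1}) (subtopology PT FW)) (\<lambda>x. (1::real, x))"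
    by (intro continuous_map_pairedI) (auto simp: continuous_map_id[unfolded id_def])
  have g_c: "continuous_map (subtopology PT FW) (subtopology PT TT) (HH 1)"
  proof (rule continuous_map_into_subtopology)
    show "continuous_map (subtopology PT FW) PT (HH 1)"
    proof (rule continuous_map_eq[OF continuous_map_compose[OF pair HH_cont]])
      show "\<And>x. x \<in> topspace (subtopology PT FW) \<Longrightarrow> ((\<lambda>p. HH (fst p) (snd p)) \<circ> (\<lambda>x. (1, x))) x = HH 1 x"
        by simp
    qed
    show "HH 1 \<in> topspace (subtopology PT FW) \<rightarrow> TT"
      by (intro Pi_I, unfold top2, rule HH_1)
  qed
  have H1: "homotopic_with (\<lambda>h. True) (subtopology PT TT) (subtopology PT TT) (HH 0) (HH 1)"
    unfolding homotopic_with_def using hT by (intro exI[of _ "\<lambda>p. HH (fst p) (snd p)"]) auto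
  have H1': "homotopic_with (\<lambda>h. True) (subtopology PT TT) (subtopology PT TT) (HH 1 \<circ> id) id"
    by (rule homotopic_with_eq[OF H1[unfolded homotopic_with_sym[of _ _ _ "HH 0"]]]) (use top1 HH_0 in auto)
  have H2: "homotopic_with (\<lambda>h. True) (subtopology PT FW) (subtopology PT FW) (HH 0) (HH 1)"
    unfolding homotopic_with_def using hF by (intro exI[of _ "\<lambda>p. HH (fst p) (snd p)"]) auto
  have H2': "homotopic_with (\<lambda>h. True) (subtopology PT FW) (subtopology PT FW) (id \<circ> HH 1) id"
    by (rule homotopic_with_eq[OF H2[unfolded homotopic_with_sym[of _ _ _ "HH 0"]]]) (use top2 HH_0 in auto)
  show ?thesis unfolding homotopy_equivalence_map_def
    using c1 g_c H1' H2' by blast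
qed

end


context blocks begin

abbreviation "SPH i \<equiv> rmac_top (A i) (bdry_simplex (A i))"

lemma topspace_rmac_top: "topspace (rmac_top W K) = rmac W K"
proof -
  have "rmac W K \<subseteq> PiE W (\<lambda>_. UNIV)" unfolding rmac_def by (auto simp: PiE_iff)
  then show ?thesis unfolding rmac_top_def by auto
qed

lemma homeo:
  "homeomorphic_map (rmac_top VV LL) (product_topology SPH {..<r}) (\<lambda>x. \<lambda>i\<in>{..<r}. restrict x (A i))"
proof -
  define F where "F = (\<lambda>x::'a\<Rightarrow>real. \<lambda>i\<in>{..<r}. restrict x (A i))"
  define G where "G = (\<lambda>y::nat\<Rightarrow>'a\<Rightarrow>real. \<lambda>v\<in>VV. y (blk v) v)"
  have topP: "topspace (product_topology SPH {..<r}) = PiE {..<r} (\<lambda>i. rmac (A i) (bdry_simplex (A i)))"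
    by (simp add: topspace_rmac_top)
  have cF: "continuous_map (rmac_top VV LL) (product_topology SPH {..<r}) F"
  proof (subst continuous_map_componentwise, intro conjI ballI)
    show "F ` topspace (rmac_top VV LL) \<subseteq> extensional {..<r}" unfolding F_def by auto
  next
    fix i assume i: "i \<in> {..<r}"
    show "continuous_map (rmac_top VV LL) (SPH i) (\<lambda>x. F x i)"
      unfolding rmac_top_def
    proof (rule continuous_map_into_subtopology)
      show "continuous_map (subtopology PT (rmac VV LL)) (product_topology (\<lambda>_. euclideanreal) (A i)) (\<lambda>x. F x i)"
      proof (subst continuous_map_componentwise, intro conjI ballI)
        show "(\<lambda>x. F x i) ` topspace (subtopology PT (rmac VV LL)) \<subseteq> extensional (A i)"
          unfolding F_def using i by auto
      next
        fix v assume v: "v \<in> A i"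
        have "continuous_map (subtopology PT (rmac VV LL)) euclideanreal (\<lambda>x. x v)"
          using v i by (intro continuous_map_from_subtopology continuous_map_product_projection) auto
        then show "continuous_map (subtopology PT (rmac VV LL)) euclideanreal (\<lambda>x. F x i v)"
          unfolding F_def using i v by simp
      qed
      show "(\<lambda>x. F x i) \<in> topspace (subtopology PT (rmac VV LL)) \<rightarrow> rmac (A i) (bdry_simplex (A i))"
      proof
        fix x assume "x \<in> topspace (subtopology PT (rmac VV LL))"
        then have "x \<in> rmac VV LL" by auto
        then have "\<forall>v\<in>VV. x v \<in> {0..1}" "\<forall>i<r. \<exists>v\<in>A i. x v \<in> {0,1}" using rmac_L by auto
        then show "F x i \<in> rmac (A i) (bdry_simplex (A i))"
          unfolding rmac_bdry F_def using i by auto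
      qed
    qed
  qed
  have cG: "continuous_map (product_topology SPH {..<r}) (rmac_top VV LL) G"
    unfolding rmac_top_def[of VV LL]
  proof (rule continuous_map_into_subtopology)
    show "continuous_map (product_topology SPH {..<r}) PT G"
    proof (subst continuous_map_componentwise, intro conjI ballI)
      show "G ` topspace (product_topology SPH {..<r}) \<subseteq> extensional VV" unfolding G_def by auto
    next
      fix v assume v: "v \<in> VV"
      then obtain i where i: "i < r" "v \<in> A i" by auto
      have c1: "continuous_map (product_topology SPH {..<r}) (SPH i) (\<lambda>y. y i)"
        using i by (intro continuous_map_product_projection) auto
      have c2: "continuous_map (SPH i) euclideanreal (\<lambda>z. z v)"
        unfolding rmac_top_def using i
        by (intro continuous_map_from_subtopology continuous_map_product_projection) auto
      have "continuous_map (product_topology SPH {..<r}) euclideanreal (\<lambda>y. y i v)"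
        using continuous_map_compose[OF c1 c2] by (simp add: comp_def)
      then show "continuous_map (product_topology SPH {..<r}) euclideanreal (\<lambda>y. G y v)"
        unfolding G_def using v blk[OF i] by simp
    qed
    show "G \<in> topspace (product_topology SPH {..<r}) \<rightarrow> rmac VV LL"
    proof
      fix y assume "y \<in> topspace (product_topology SPH {..<r})"
      then have y: "\<And>i. i < r \<Longrightarrow> y i \<in> rmac (A i) (bdry_simplex (A i))" unfolding topP by auto
      have "\<forall>v\<in>VV. G y v \<in> {0..1}"
      proof
        fix v assume "v \<in> VV"
        then obtain i where i: "i < r" "v \<in> A i" by auto
        then show "G y v \<in> {0..1}" using y[OF i(1)] blk[OF i] unfolding G_def rmac_bdry by auto
      qed
      moreover have "\<forall>i<r. \<exists>v\<in>A i. G y v \<in> {0,1}"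
      proof (intro allI impI)
        fix i assume i: "i < r"
        then obtain v where "v \<in> A i" "y i v \<in> {0,1}" using y[OF i] unfolding rmac_bdry by auto
        then show "\<exists>v\<in>A i. G y v \<in> {0,1}" using blk[OF i] i unfolding G_def by auto
      qed
      moreover have "G y \<in> extensional VV" unfolding G_def by simp
      ultimately show "G y \<in> rmac VV LL" unfolding rmac_L by blast
    qed
  qed
  have GF: "G (F x) = x" if x: "x \<in> topspace (rmac_top VV LL)" for x
  proof
    fix v
    have xe: "x \<in> extensional VV" using x rmac_L by (auto simp: topspace_rmac_top)
    show "G (F x) v = x v"
    proof (cases "v \<in> VV")
      case True
      then obtain i where i: "i < r" "v \<in> A i" by auto
      then show ?thesis unfolding G_def F_def using blk[OF i] by auto
    next
      case False then show ?thesis using xe unfolding G_def by (simp add: extensional_def)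
    qed
  qed
  have FG: "F (G y) = y" if y: "y \<in> topspace (product_topology SPH {..<r})" for y
  proof
    fix i
    show "F (G y) i = y i"
    proof (cases "i < r")
      case True
      have ye: "y i \<in> extensional (A i)" using y True unfolding topP rmac_bdry by auto
      show ?thesis
      proof
        fix v show "F (G y) i v = y i v"
        proof (cases "v \<in> A i")
          case True2: True
          then show ?thesis unfolding F_def G_def using True blk[OF True True2] by auto
        next
          case False then show ?thesis unfolding F_def using True ye by (simp add: extensional_def)
        qed
      qed
    next
      case False
      then show ?thesis using y unfolding F_def topP by (auto simp: PiE_iff extensional_def)
    qed
  qed
  have "homeomorphic_maps (rmac_top VV LL) (product_topology SPH {..<r}) F G"
    unfolding homeomorphic_maps_def using cF cG GF FG by blast
  then show ?thesis unfolding F_def homeomorphic_map_maps by blast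
qed

end


theorem lemma4p3:
  fixes A :: "nat \<Rightarrow> 'a set" and r :: nat
  assumes "r \<ge> 1"
    and "\<And>i. i < r \<Longrightarrow> finite (A i)"
    and "\<And>i. i < r \<Longrightarrow> A i \<noteq> {}"
    and "\<And>i j. i < r \<Longrightarrow> j < r \<Longrightarrow> i \<noteq> j \<Longrightarrow> A i \<inter> A j = {}"
  defines "V \<equiv> (\<Union>i<r. A i)"
    and "L \<equiv> cx_join (\<lambda>i. bdry_simplex (A i)) r"
  shows "homeomorphic_map (rmac_top V L)
           (product_topology (\<lambda>i. rmac_top (A i) (bdry_simplex (A i))) {..<r})
           (\<lambda>x. \<lambda>i\<in>{..<r}. restrict x (A i)) \<and>
         homotopy_equivalence_map
           (subtopology (rmac_top V L) {x \<in> rmac V L. \<exists>i<r. \<forall>v\<in>A i. x v = 0})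
           (subtopology (rmac_top V L) (rmac_fw V L (card V - 1)))
           id"
proof -
  interpret blocks A r using assms(2-4) by unfold_locales auto
  have finV: "finite V" unfolding V_def using assms(2) by auto
  have neV: "V \<noteq> {}" unfolding V_def using assms(1,3) by fastforce
  have fw: "rmac_fw V L (card V - 1) = {x \<in> rmac V L. \<exists>v\<in>V. x v = 0}"
  proof -
    have c: "card V - (card V - 1) = 1" using finV neV by (simp add: card_gt_0_iff Suc_le_eq)
    have "1 \<le> card {v \<in> V. x v = 0} \<longleftrightarrow> (\<exists>v\<in>V. x v = 0)" for x :: "'a \<Rightarrow> real"
    proof -
      have "finite {v \<in> V. x v = 0}" using finV by simp
      then show ?thesis by (auto simp: Suc_le_eq card_gt_0_iff)
    qed
    then show ?thesis unfolding rmac_fw_def c by blast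
  qed
  have e1: "subtopology (rmac_top V L) {x \<in> rmac V L. \<exists>i<r. \<forall>v\<in>A i. x v = 0} = subtopology PT TT"
    unfolding rmac_top_def subtopology_subtopology V_def L_def by (simp add: Int_absorb1 Collect_conj_eq Int_assoc[symmetric])
  have e2': "subtopology (rmac_top V L) (rmac_fw V L (card V - 1)) = subtopology (rmac_top V L) {x \<in> rmac V L. \<exists>v\<in>V. x v = 0}"
    by (simp only: fw)
  have e3: "subtopology (rmac_top V L) {x \<in> rmac V L. \<exists>v\<in>V. x v = 0} = subtopology PT FW"
    unfolding rmac_top_def subtopology_subtopology V_def L_def by (simp add: Collect_conj_eq Int_assoc[symmetric])
  have e2: "subtopology (rmac_top V L) (rmac_fw V L (card V - 1)) = subtopology PT FW"
    using e2' e3 by (simp only:)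
  show ?thesis
    unfolding e1 e2 using homeo hom_equiv unfolding V_def L_def by blast
qed


end
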